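(* Let $(G,\cdot)$ be a loop with identity $e$ and $(H,\cdot)$ a non-trivial subloop such that $(xs\cdot z)s=x(sz\cdot s)$ for all $x,z\in G$, $s\in H$. Let $(U,V,W)\in\mathrm{S_{2nd}LAUT}(G_H)\cap\mathrm{S_{2nd}RAUT}(G_H)$, $s_1=eU$ and $s_2=eV$. Then $A=UR_{s_1}^{-1}\in\mathrm{S_{2nd}LPAUT}(G_H)\cap\mathrm{S_{2nd}RPAUT}(G_H)$ with second Smarandache left companion and second Smarandache right companion $c=s_1s_2\cdot s_1$, and $$(U,V,W)=(A,AR_c,AR_c)\,(R_{s_1}^{-1},L_{s_1}R_{s_1},R_{s_1})^{-1}.$$
   Context: Juxtaposition binds more tightly than $\cdot$. Maps are written on the right and composed left to right; $xR_s=x\cdot s$, $xL_s=s\cdot x$; triples are multiplied componentwise. $SYM(G)$ is the group of bijections of $G$; $SSYM(G_H)=\{A\in SYM(G):HA=H\}$. $\mathrm{S_{2nd}RAUT}(G_H)$: triples $(U,V,W)$ with $U,W\in SYM(G)$, $V\in SSYM(G_H)$, $xU\cdot sV=(x\cdot s)W$ for all $x\in G$, $s\in H$. $\mathrm{S_{2nd}LAUT}(G_H)$: triples $(U,V,W)$ with $V,W\in SYM(G)$, $U\in SSYM(G_H)$, $sU\cdot yV=(s\cdot y)W$ for all $y\in G$, $s\in H$. $\mathrm{S_{2nd}RPAUT}(G_H)$ (resp. $\mathrm{S_{2nd}LPAUT}(G_H)$) is the set of $A\in SSYM(G_H)$ for which there is $c\in H$ with $(A,AR_c,AR_c)\in\mathrm{S_{2nd}RAUT}(G_H)$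 (resp. $\in\mathrm{S_{2nd}LAUT}(G_H)$); $c$ is called a second Smarandache right (resp. left) companion of $A$. *)

theory Defs
  imports Main
begin

(* The loop is the whole type 'a with multiplication m and identity e.
   Maps act on the right and compose left to right: "x U V" = (V \<circ> U) x. *)

definition loop :: "('a \<Rightarrow> 'a \<Rightarrow> 'a) \<Rightarrow> 'a \<Rightarrow> bool" where
  "loop m e \<longleftrightarrow> (\<forall>x. m e x = x \<and> m x e = x)
     \<and> (\<forall>a b. \<exists>!x. m a x = b) \<and> (\<forall>a b. \<exists>!y. m y a = b)"

definition subloop :: "('a \<Rightarrow> 'a \<Rightarrow> 'a) \<Rightarrow> 'a set \<Rightarrow> bool" where
  "subloop m H \<longleftrightarrow> H \<noteq> {}
     \<and> (\<forall>a\<in>H. \<forall>b\<in>H. m a b \<in> H)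
     \<and> (\<forall>a\<in>H. \<forall>b\<in>H. \<forall>x. m a x = b \<longrightarrow> x \<in> H)
     \<and> (\<forall>a\<in>H. \<forall>b\<in>H. \<forall>y. m y a = b \<longrightarrow> y \<in> H)"

definition Rm :: "('a \<Rightarrow> 'a \<Rightarrow> 'a) \<Rightarrow> 'a \<Rightarrow> 'a \<Rightarrow> 'a" where
  "Rm m s = (\<lambda>x. m x s)"

definition Lm :: "('a \<Rightarrow> 'a \<Rightarrow> 'a) \<Rightarrow> 'a \<Rightarrow> 'a \<Rightarrow> 'a" where
  "Lm m s = (\<lambda>x. m s x)"

definition SSYM :: "'a set \<Rightarrow> ('a \<Rightarrow> 'a) set" where
  "SSYM H = {A. bij A \<and> A ` H = H}"

definition S2RAUT :: "('a \<Rightarrow> 'a \<Rightarrow> 'a) \<Rightarrow> 'a set \<Rightarrow> (('a \<Rightarrow> 'a) \<times> ('a \<Rightarrow> 'a) \<times> ('a \<Rightarrow> 'a)) set" where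
  "S2RAUT m H = {(U, V, W). bij U \<and> bij W \<and> V \<in> SSYM H
      \<and> (\<forall>x. \<forall>s\<in>H. m (U x) (V s) = W (m x s))}"

definition S2LAUT :: "('a \<Rightarrow> 'a \<Rightarrow> 'a) \<Rightarrow> 'a set \<Rightarrow> (('a \<Rightarrow> 'a) \<times> ('a \<Rightarrow> 'a) \<times> ('a \<Rightarrow> 'a)) set" where
  "S2LAUT m H = {(U, V, W). bij V \<and> bij W \<and> U \<in> SSYM H
      \<and> (\<forall>y. \<forall>s\<in>H. m (U s) (V y) = W (m s y))}"

(* A R_c (first A, then R_c) is  Rm m c \<circ> A *)
definition S2RPAUT :: "('a \<Rightarrow> 'a \<Rightarrow> 'a) \<Rightarrow> 'a set \<Rightarrow> ('a \<Rightarrow> 'a) set" where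
  "S2RPAUT m H = {A \<in> SSYM H. \<exists>c\<in>H. (A, Rm m c \<circ> A, Rm m c \<circ> A) \<in> S2RAUT m H}"

definition S2LPAUT :: "('a \<Rightarrow> 'a \<Rightarrow> 'a) \<Rightarrow> 'a set \<Rightarrow> ('a \<Rightarrow> 'a) set" where
  "S2LPAUT m H = {A \<in> SSYM H. \<exists>c\<in>H. (A, Rm m c \<circ> A, Rm m c \<circ> A) \<in> S2LAUT m H}"

definition tmul :: "('a \<Rightarrow> 'a) \<times> ('a \<Rightarrow> 'a) \<times> ('a \<Rightarrow> 'a) \<Rightarrow> ('a \<Rightarrow> 'a) \<times> ('a \<Rightarrow> 'a) \<times> ('a \<Rightarrow> 'a)
    \<Rightarrow> ('a \<Rightarrow> 'a) \<times> ('a \<Rightarrow> 'a) \<times> ('a \<Rightarrow> 'a)" where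
  "tmul T T' = (case T of (U, V, W) \<Rightarrow> case T' of (U', V', W') \<Rightarrow> (U' \<circ> U, V' \<circ> V, W' \<circ> W))"

definition tinv :: "('a \<Rightarrow> 'a) \<times> ('a \<Rightarrow> 'a) \<times> ('a \<Rightarrow> 'a) \<Rightarrow> ('a \<Rightarrow> 'a) \<times> ('a \<Rightarrow> 'a) \<times> ('a \<Rightarrow> 'a)" where
  "tinv T = (case T of (U, V, W) \<Rightarrow> (inv U, inv V, inv W))"

end

theory Submission
  imports Defs
begin

lemma bijR: "loop m e \<Longrightarrow> bij (Rm m s)"
proof -
  assume l: "loop m e"
  hence u: "\<And>a b. \<exists>!y. m y a = b" unfolding loop_def by blast
  have i: "inj (Rm m s)" unfolding inj_def Rm_def
  proof (intro allI impI)
    fix x y assume "m x s = m y s" thus "x = y" using u[of s "m y s"] by blast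
  qed
  have "surj (Rm m s)" unfolding surj_def Rm_def
  proof
    fix y show "\<exists>x. y = m x s" using u[of s y] by blast
  qed
  thus ?thesis using i bij_def by blast
qed

lemma bijL: "loop m e \<Longrightarrow> bij (Lm m s)"
proof -
  assume l: "loop m e"
  hence u: "\<And>a b. \<exists>!y. m a y = b" unfolding loop_def by blast
  have i: "inj (Lm m s)" unfolding inj_def Lm_def
  proof (intro allI impI)
    fix x y assume "m s x = m s y" thus "x = y" using u[of s "m s y"] by blast
  qed
  have "surj (Lm m s)" unfolding surj_def Lm_def
  proof
    fix y show "\<exists>x. y = m s x" using u[of s y] by blast
  qed
  thus ?thesis using i bij_def by blast
qed

lemma Rinv1: "loop m e \<Longrightarrow> m (inv (Rm m s) x) s = x"
  using surj_f_inv_f[OF bij_is_surj[OF bijR[of m e s]], of x] unfolding Rm_def by simp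

lemma Rinv2: "loop m e \<Longrightarrow> inv (Rm m s) (m x s) = x"
  using inv_f_f[OF bij_is_inj[OF bijR[of m e s]], of x] unfolding Rm_def by simp

lemma eH: "loop m e \<Longrightarrow> subloop m H \<Longrightarrow> e \<in> H"
proof -
  assume l: "loop m e" and s: "subloop m H"
  obtain a where a: "a \<in> H" using s unfolding subloop_def by blast
  have "m a e = a" using l unfolding loop_def by blast
  moreover have dv: "\<And>a b x. a \<in> H \<Longrightarrow> b \<in> H \<Longrightarrow> m a x = b \<Longrightarrow> x \<in> H" using s unfolding subloop_def by blast
  ultimately show ?thesis using a by blast
qed

lemma RimgH: "loop m e \<Longrightarrow> subloop m H \<Longrightarrow> c \<in> H \<Longrightarrow> Rm m c ` H = H"
proof -
  assume l: "loop m e" and s: "subloop m H" and c: "c \<in> H"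
  show ?thesis
  proof
    have cl: "\<And>a b. a \<in> H \<Longrightarrow> b \<in> H \<Longrightarrow> m a b \<in> H" using s unfolding subloop_def by blast
    show "Rm m c ` H \<subseteq> H" using cl c unfolding Rm_def by blast
    show "H \<subseteq> Rm m c ` H"
    proof
      fix h assume h: "h \<in> H"
      have u: "\<And>a b. \<exists>!y. m y a = b" using l unfolding loop_def by blast
      obtain y where y: "m y c = h" using u[of c h] by blast
      have dv: "\<And>a b y. a \<in> H \<Longrightarrow> b \<in> H \<Longrightarrow> m y a = b \<Longrightarrow> y \<in> H" using s unfolding subloop_def by blast
      have "y \<in> H" using dv[OF c h y] .
      thus "h \<in> Rm m c ` H" using y unfolding Rm_def by auto
    qed
  qed
qed

theorem theorem3p8:
  fixes m :: "'a \<Rightarrow> 'a \<Rightarrow> 'a" and e :: 'a and H :: "'a set"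
    and U V W :: "'a \<Rightarrow> 'a"
  assumes "loop m e"
    and "subloop m H"
    and "H \<noteq> {e}"
    and "\<forall>x z. \<forall>s\<in>H. m (m (m x s) z) s = m x (m (m s z) s)"
    and "(U, V, W) \<in> S2LAUT m H \<inter> S2RAUT m H"
  shows "let s1 = U e; s2 = V e; A = inv (Rm m s1) \<circ> U; c = m (m s1 s2) s1 in
    A \<in> S2LPAUT m H \<inter> S2RPAUT m H
    \<and> c \<in> H
    \<and> (A, Rm m c \<circ> A, Rm m c \<circ> A) \<in> S2LAUT m H
    \<and> (A, Rm m c \<circ> A, Rm m c \<circ> A) \<in> S2RAUT m H
    \<and> (U, V, W) = tmul (A, Rm m c \<circ> A, Rm m c \<circ> A)
                    (tinv (inv (Rm m s1), Rm m s1 \<circ> Lm m s1, Rm m s1))"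
proof -
  note l = assms(1) and sl = assms(2) and id = assms(4)
  have bU: "bij U" and bV: "bij V" and bW: "bij W" and UH: "U ` H = H" and VH: "V ` H = H"
    and Lc: "\<And>y s. s \<in> H \<Longrightarrow> m (U s) (V y) = W (m s y)"
    and Rc: "\<And>x s. s \<in> H \<Longrightarrow> m (U x) (V s) = W (m x s)"
    using assms(5) unfolding S2LAUT_def S2RAUT_def SSYM_def by auto
  have eh: "e \<in> H" using eH[OF l sl] .
  define s1 where "s1 = U e"
  define s2 where "s2 = V e"
  define A where "A = inv (Rm m s1) \<circ> U"
  define c where "c = m (m s1 s2) s1"
  have s1H: "s1 \<in> H" using UH eh s1_def by auto
  have s2H: "s2 \<in> H" using VH eh s2_def by auto
  have cl: "\<And>a b. a \<in> H \<Longrightarrow> b \<in> H \<Longrightarrow> m a b \<in> H" using sl unfolding subloop_def by blast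
  have cH: "c \<in> H" unfolding c_def using cl[OF cl[OF s1H s2H] s1H] .
  have re: "\<And>x. m x e = x" and le: "\<And>x. m e x = x" using l unfolding loop_def by blast+
  have W1: "\<And>x. W x = m (U x) s2" using Rc[OF eh] re unfolding s2_def by simp
  have W2: "\<And>y. W y = m s1 (V y)" using Lc[OF eh] le unfolding s1_def by simp
  have UA: "\<And>x. U x = m (A x) s1" unfolding A_def using Rinv1[OF l] by simp
  have idr: "\<And>x z s. s \<in> H \<Longrightarrow> m (m (m x s) z) s = m x (m (m s z) s)"
    using id by blast
  have key: "\<And>y. m (A y) c = m (W y) s1"
    unfolding c_def W1 UA using idr[OF s1H] by simp
  have bA: "bij A" unfolding A_def using bU bijR[OF l] bij_imp_bij_inv bij_comp by blast
  have AH: "A ` H = H"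
  proof -
    have "inv (Rm m s1) ` H = H"
      using image_inv_f_f[OF bij_is_inj[OF bijR[OF l, of s1]], of H] RimgH[OF l sl s1H] by simp
    thus ?thesis unfolding A_def using UH image_comp[of "inv (Rm m s1)" U H] by simp
  qed
  have bRA: "bij (Rm m c \<circ> A)" using bA bijR[OF l] bij_comp by blast
  have RAH: "(Rm m c \<circ> A) ` H = H" using AH RimgH[OF l sl cH] image_comp[of "Rm m c" A H] by simp
  have core: "\<And>x y. m (A x) ((Rm m c \<circ> A) y) = m (m (U x) (V y)) s1"
  proof -
    fix x y
    have "m (A x) ((Rm m c \<circ> A) y) = m (A x) (m (m s1 (V y)) s1)"
      using key W2 by (simp add: Rm_def)
    also have "\<dots> = m (m (m (A x) s1) (V y)) s1" using idr[OF s1H] by simp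
    finally show "m (A x) ((Rm m c \<circ> A) y) = m (m (U x) (V y)) s1" using UA by simp
  qed
  have LL: "\<forall>y. \<forall>s\<in>H. m (A s) ((Rm m c \<circ> A) y) = (Rm m c \<circ> A) (m s y)"
  proof (intro allI ballI)
    fix y s assume sH: "s \<in> H"
    have "m (A s) ((Rm m c \<circ> A) y) = m (W (m s y)) s1" using core Lc[OF sH] by simp
    also have "\<dots> = (Rm m c \<circ> A) (m s y)" using key by (simp add: Rm_def)
    finally show "m (A s) ((Rm m c \<circ> A) y) = (Rm m c \<circ> A) (m s y)" .
  qed
  have RR: "\<forall>x. \<forall>s\<in>H. m (A x) ((Rm m c \<circ> A) s) = (Rm m c \<circ> A) (m x s)"
  proof (intro allI ballI)
    fix x s assume sH: "s \<in> H"
    have "m (A x) ((Rm m c \<circ> A) s) = m (W (m x s)) s1" using core Rc[OF sH] by simp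
    also have "\<dots> = (Rm m c \<circ> A) (m x s)" using key by (simp add: Rm_def)
    finally show "m (A x) ((Rm m c \<circ> A) s) = (Rm m c \<circ> A) (m x s)" .
  qed
  have ASS: "A \<in> SSYM H" unfolding SSYM_def using bA AH by blast
  have RASS: "Rm m c \<circ> A \<in> SSYM H" unfolding SSYM_def using bRA RAH by blast
  have Lmem: "(A, Rm m c \<circ> A, Rm m c \<circ> A) \<in> S2LAUT m H"
    unfolding S2LAUT_def using bRA ASS LL by blast
  have Rmem: "(A, Rm m c \<circ> A, Rm m c \<circ> A) \<in> S2RAUT m H"
    unfolding S2RAUT_def using bA bRA RASS RR by blast
  have Pmem: "A \<in> S2LPAUT m H \<inter> S2RPAUT m H"
    unfolding S2LPAUT_def S2RPAUT_def using ASS cH Lmem Rmem by blast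
  have bRL: "bij (Rm m s1 \<circ> Lm m s1)" using bijR[OF l] bijL[OF l] bij_comp by blast
  have e1: "inv (inv (Rm m s1)) \<circ> A = U"
    unfolding inv_inv_eq[OF bijR[OF l, of s1]] using UA by (simp add: Rm_def fun_eq_iff)
  have e2: "inv (Rm m s1 \<circ> Lm m s1) \<circ> (Rm m c \<circ> A) = V"
  proof
    fix y
    have "(Rm m c \<circ> A) y = (Rm m s1 \<circ> Lm m s1) (V y)"
      using key W2 by (simp add: Rm_def Lm_def)
    thus "(inv (Rm m s1 \<circ> Lm m s1) \<circ> (Rm m c \<circ> A)) y = V y"
      using inv_f_f[OF bij_is_inj[OF bRL], of "V y"] by simp
  qed
  have e3: "inv (Rm m s1) \<circ> (Rm m c \<circ> A) = W"
  proof
    fix y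
    show "(inv (Rm m s1) \<circ> (Rm m c \<circ> A)) y = W y"
      using key Rinv2[OF l] by (simp add: Rm_def)
  qed
  have Teq: "(U, V, W) = tmul (A, Rm m c \<circ> A, Rm m c \<circ> A)
                    (tinv (inv (Rm m s1), Rm m s1 \<circ> Lm m s1, Rm m s1))"
    unfolding tmul_def tinv_def using e1 e2 e3 by simp
  show ?thesis
    unfolding Let_def s1_def[symmetric] s2_def[symmetric] A_def[symmetric] c_def[symmetric]
    using Pmem cH Lmem Rmem Teq by blast
qed

end
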